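(* Let $H=\mathbb{E}_{\mathbf{x}\sim\gamma}\big[\mathbf{x}\,(\nabla\log p(\mathbf{x})+\mathbf{x})^\top\big]$ and suppose $H$ is symmetric with eigendecomposition $H=VDV^\top$, $V$ orthogonal, $D=\mathrm{diag}(\nu_1,\dots,\nu_d)$. Then over all orthogonal $R\in\mathbb{R}^{d\times d}$, the quantity $\sum_{i=1}^d(RHR^\top)_{ii}^2$ is maximized at $R=V^\top$, and for this $R$, $$\tilde I(\gamma,p_R)\ge\sum_{i=1}^d\nu_i^2.$$
   Context: $\gamma=\mathcal{N}(0,I_d)$. Standing assumptions: $p$ is a positive, continuously differentiable probability density on $\mathbb{R}^d$ with $|\log p(\mathbf{x})|\le c(1+\|\mathbf{x}\|_2^m)$ and $\|\nabla\log p(\mathbf{x})\|_2\le c(1+\|\mathbf{x}\|_2^m)$ for some $c>0,m\ge2$. (If $p$ is twice differentiable with suitable integrability, Stein's identity gives $H=\mathbb{E}_\gamma[\nabla^2\log p+I_d]$, which is symmetric.) For orthogonal $R$, $p_R(\mathbf{x})=p(R^\top\mathbf{x})$. For a product density $q$, $\tilde I(q,p)=\sum_{i=1}^d \mathbb{E}_{q}\big[\big(\mathbb{E}_{q_{-i}}[\partial_i\log q(\mathbf{x})-\partial_i\log p(\mathbf{x})]\big)^2\big]$, where $\mathbb{E}_{q_{-i}}$ is the expectation over coordinates other than $x_i$ under $q$. *)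

theory Defs
  imports "HOL-Analysis.Analysis"
begin

definition gauss_dens :: "real^'n \<Rightarrow> real" where
  "gauss_dens x = (2 * pi) powr (- real CARD('n) / 2) * exp (- (norm x)\<^sup>2 / 2)"

definition gauss_measure :: "(real^'n) measure" where
  "gauss_measure = density lborel (\<lambda>x. ennreal (gauss_dens x))"

definition dens_measure :: "(real^'n \<Rightarrow> real) \<Rightarrow> (real^'n) measure" where
  "dens_measure q = density lborel (\<lambda>x. ennreal (q x))"

definition partial :: "'n \<Rightarrow> (real^'n \<Rightarrow> real) \<Rightarrow> real^'n \<Rightarrow> real" where
  "partial i f x = deriv (\<lambda>t. f (x + t *\<^sub>R axis i 1)) 0"

definition upd_coord :: "real^'n \<Rightarrow> 'n \<Rightarrow> real \<Rightarrow> real^'n" where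
  "upd_coord y i t = (\<chi> j. if j = i then t else y $ j)"

definition rot_dens :: "real^'n^'n \<Rightarrow> (real^'n \<Rightarrow> real) \<Rightarrow> real^'n \<Rightarrow> real" where
  "rot_dens R p x = p (transpose R *v x)"

definition diag_mat :: "real^'n \<Rightarrow> real^'n^'n" where
  "diag_mat \<nu> = (\<chi> i j. if i = j then \<nu> $ i else 0)"

text \<open>tilde I(q,p) for a product density q: the inner expectation over q_{-i} with x_i
  fixed is written as the q-expectation over y with coordinate i replaced by x_i
  (integrating the i-th coordinate of a product density against a function not
  depending on it is trivial).\<close>
definition tildeI :: "(real^'n \<Rightarrow> real) \<Rightarrow> (real^'n \<Rightarrow> real) \<Rightarrow> real" where
  "tildeI q p = (\<Sum>i\<in>UNIV.
     integral\<^sup>L (dens_measure q) (\<lambda>x.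
       (integral\<^sup>L (dens_measure q) (\<lambda>y.
          partial i (\<lambda>z. ln (q z)) (upd_coord y i (x $ i))
          - partial i (\<lambda>z. ln (p z)) (upd_coord y i (x $ i))))\<^sup>2))"

end

theory Submission
  imports Defs "HOL-Probability.Probability"
begin


typedef 'a wc = "UNIV :: 'a set" by auto

instance wc :: (finite) finite
proof
  have "(UNIV :: 'a wc set) = Abs_wc ` UNIV"
    by (metis Abs_wc_cases surj_def)
  then show "finite (UNIV :: 'a wc set)" by (metis finite_imageI finite)
qed

definition wc_idx :: "'a::finite wc \<Rightarrow> nat" where
  "wc_idx = (SOME f. inj f)"

lemma wc_idx_inj: "inj (wc_idx :: 'a::finite wc \<Rightarrow> nat)"
proof -
  have "\<exists>f::'a wc \<Rightarrow> nat. inj f"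
    using finite_imp_inj_to_nat_seg[of "UNIV :: 'a wc set"] by auto
  then show ?thesis unfolding wc_idx_def by (rule someI_ex)
qed

instantiation wc :: (finite) wellorder
begin
definition less_eq_wc :: "'a wc \<Rightarrow> 'a wc \<Rightarrow> bool" where
  "less_eq_wc x y = (wc_idx x \<le> wc_idx y)"
definition less_wc :: "'a wc \<Rightarrow> 'a wc \<Rightarrow> bool" where
  "less_wc x y = (wc_idx x < wc_idx y)"
instance
proof
  fix x y z :: "'a wc"
  show "(x < y) = (x \<le> y \<and> \<not> y \<le> x)" unfolding less_eq_wc_def less_wc_def by linarith
  show "x \<le> x" by (simp add: less_eq_wc_def)
  show "x \<le> y \<Longrightarrow> y \<le> z \<Longrightarrow> x \<le> z" by (simp add: less_eq_wc_def)
  show "x \<le> y \<Longrightarrow> y \<le> x \<Longrightarrow> x = y"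
    using wc_idx_inj unfolding less_eq_wc_def inj_def by (meson le_antisym)
  show "x \<le> y \<or> y \<le> x" unfolding less_eq_wc_def by linarith
next
  fix P :: "'a wc \<Rightarrow> bool" and a
  assume "\<And>x. (\<And>y. y < x \<Longrightarrow> P y) \<Longrightarrow> P x"
  then show "P a"
    unfolding less_wc_def by (induct a rule: measure_induct_rule[of wc_idx]) blast
qed
end

lemma lborel_orth_wo:
  fixes f :: "(real, 'm::{finite,wellorder}) vec \<Rightarrow> (real, 'm) vec"
  assumes f: "orthogonal_transformation f"
  shows "distr lborel borel f = lborel"
proof -
  have lin: "linear f" using f orthogonal_transformation_linear by blast
  have fm: "f \<in> borel_measurable borel"
    using lin by (simp add: borel_measurable_continuous_onI linear_continuous_on linear_linear)
  have bij: "bij f" using f orthogonal_transformation_bij by blast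
  have fi: "orthogonal_transformation (inv f)" using f orthogonal_transformation_inv by blast
  show ?thesis
  proof (rule lborel_eqI[symmetric])
    fix l u :: "(real,'m) vec"
    assume lu: "\<And>b. b \<in> Basis \<Longrightarrow> l \<bullet> b \<le> u \<bullet> b"
    have pre: "f -` box l u = inv f ` box l u"
      using bij by (simp add: bij_vimage_eq_inv_image)
    have bm: "f -` box l u \<in> sets borel"
      using fm by (simp add: measurable_sets_borel)
    have "emeasure (distr lborel borel f) (box l u) = emeasure lborel (f -` box l u)"
      using fm by (subst emeasure_distr) auto
    also have "\<dots> = emeasure lebesgue (f -` box l u)"
      using bm by simp
    also have "\<dots> = ennreal (measure lebesgue (inv f ` box l u))"
      using measurable_orthogonal_image[OF fi, of "box l u"] pre
      by (simp add: emeasure_eq_measure2)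
    also have "\<dots> = ennreal (measure lebesgue (box l u))"
      using measure_orthogonal_image[OF fi, of "box l u"] by simp
    also have "\<dots> = emeasure lborel (box l u)"
      by (simp add: emeasure_eq_measure2)
    also have "\<dots> = (\<Prod>b\<in>Basis. (u - l) \<bullet> b)"
      using lu by simp
    finally show "emeasure (distr lborel borel f) (box l u) = (\<Prod>b\<in>Basis. (u - l) \<bullet> b)" .
  qed simp
qed

lemma emeasure_lborel_box_cart:
  fixes l u :: "(real,'a::finite) vec"
  assumes "\<And>i. l $ i \<le> u $ i"
  shows "emeasure lborel (box l u) = ennreal (\<Prod>i\<in>UNIV. u $ i - l $ i)"
proof -
  have "\<And>b. b \<in> Basis \<Longrightarrow> l \<bullet> b \<le> u \<bullet> b"
    using assms by (auto simp: Basis_vec_def cart_eq_inner_axis[symmetric] inner_axis)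
  then have "emeasure lborel (box l u) = ennreal (\<Prod>b\<in>Basis. (u - l) \<bullet> b)"
    by simp
  also have "(\<Prod>b\<in>Basis. (u - l) \<bullet> b) = (\<Prod>i\<in>UNIV. u $ i - l $ i)"
    by (simp add: Basis_vec_def cart_eq_inner_axis axis_eq_axis prod.UNION_disjoint inner_diff_left)
  finally show ?thesis .
qed

lemma lin_meas:
  fixes f :: "'u::euclidean_space \<Rightarrow> 'v::euclidean_space"
  shows "linear f \<Longrightarrow> f \<in> borel_measurable borel"
  by (simp add: borel_measurable_continuous_onI linear_continuous_on linear_linear)




lemma lborel_perm_vec:
  fixes \<sigma> :: "'b::finite \<Rightarrow> 'a::finite"
  assumes bij: "bij \<sigma>"
  shows "distr lborel borel (\<lambda>x::(real,'a) vec. (\<chi> j. x $ \<sigma> j) :: (real,'b) vec) = lborel"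
proof -
  let ?P = "\<lambda>x::(real,'a) vec. (\<chi> j. x $ \<sigma> j) :: (real,'b) vec"
  have lin: "linear ?P"
    by (auto simp: linear_iff vec_eq_iff)
  have fm: "?P \<in> borel_measurable borel"
    using lin by (rule lin_meas)
  have s1: "\<sigma> (inv \<sigma> i) = i" for i using surj_f_inv_f[OF bij_is_surj[OF bij]] by simp
  have s2: "inv \<sigma> (\<sigma> j) = j" for j using inv_f_f[OF bij_is_inj[OF bij]] by simp
  show ?thesis
  proof (rule lborel_eqI[symmetric])
    show "sets (distr lborel borel ?P) = sets borel" by simp
  next
    fix l u :: "(real,'b) vec"
    assume lu: "\<And>b. b \<in> Basis \<Longrightarrow> l \<bullet> b \<le> u \<bullet> b"
    have lu': "l $ j \<le> u $ j" for j
    proof -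
      have "axis j (1::real) \<in> Basis" unfolding Basis_vec_def by auto
      from lu[OF this] show ?thesis by (simp only: cart_eq_inner_axis)
    qed
    let ?l = "(\<chi> i. l $ inv \<sigma> i) :: (real,'a) vec"
    let ?u = "(\<chi> i. u $ inv \<sigma> i) :: (real,'a) vec"
    have pre: "?P -` box l u = box ?l ?u"
    proof -
      have "(\<forall>j. l $ j < x $ \<sigma> j \<and> x $ \<sigma> j < u $ j) \<longleftrightarrow>
            (\<forall>i. l $ inv \<sigma> i < x $ i \<and> x $ i < u $ inv \<sigma> i)" for x :: "(real,'a) vec"
        by (metis s1 s2)
      then show ?thesis by (simp add: mem_box_cart set_eq_iff)
    qed
    have "emeasure (distr lborel borel ?P) (box l u) = emeasure lborel (?P -` box l u)"
      using fm by (subst emeasure_distr) auto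
    also have "\<dots> = ennreal (\<Prod>i\<in>UNIV. ?u $ i - ?l $ i)"
      unfolding pre using lu' by (intro emeasure_lborel_box_cart) simp
    also have "(\<Prod>i\<in>UNIV. ?u $ i - ?l $ i) = (\<Prod>j\<in>UNIV. u $ j - l $ j)"
    proof -
      have "(\<Prod>i\<in>UNIV. ?u $ i - ?l $ i) = (\<Prod>i\<in>UNIV. u $ inv \<sigma> i - l $ inv \<sigma> i)" by simp
      also have "\<dots> = (\<Prod>j\<in>UNIV. u $ j - l $ j)"
        using prod.reindex_bij_betw[OF bij_betw_inv_into[OF bij], of "\<lambda>j. u $ j - l $ j"] bij
        by (simp add: bij_def)
      finally show ?thesis .
    qed
    also have "ennreal (\<Prod>j\<in>UNIV. u $ j - l $ j) = (\<Prod>b\<in>Basis. (u - l) \<bullet> b)"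
      using emeasure_lborel_box_cart[of l u] lu' lu by simp
    finally show "emeasure (distr lborel borel ?P) (box l u) = (\<Prod>b\<in>Basis. (u - l) \<bullet> b)" .
  qed
qed

lemma lborel_orth_matrix:
  fixes V :: "real^'n^'n"
  assumes V: "orthogonal_matrix V"
  shows "distr lborel borel (\<lambda>x. V *v x) = lborel"
proof -
  define to :: "(real,'n) vec \<Rightarrow> (real,'n wc) vec" where "to = (\<lambda>x. \<chi> j. x $ Rep_wc j)"
  define fr :: "(real,'n wc) vec \<Rightarrow> (real,'n) vec" where "fr = (\<lambda>y. \<chi> i. y $ Abs_wc i)"
  have bR: "bij (Rep_wc :: 'n wc \<Rightarrow> 'n)"
    by (metis Abs_wc_inverse Rep_wc_inverse UNIV_I bij_betw_byWitness subsetI)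
  have bA: "bij (Abs_wc :: 'n \<Rightarrow> 'n wc)"
    by (metis Abs_wc_inverse Rep_wc_inverse UNIV_I bij_betw_byWitness subsetI)
  have dto: "distr lborel borel to = lborel" unfolding to_def by (rule lborel_perm_vec[OF bR])
  have dfr: "distr lborel borel fr = lborel" unfolding fr_def by (rule lborel_perm_vec[OF bA])
  have lto: "linear to" unfolding to_def by (auto simp: linear_iff vec_eq_iff)
  have lfr: "linear fr" unfolding fr_def by (auto simp: linear_iff vec_eq_iff)
  have frto: "fr (to x) = x" for x unfolding fr_def to_def by (simp add: vec_eq_iff Abs_wc_inverse)
  have tofr: "to (fr y) = y" for y unfolding fr_def to_def by (simp add: vec_eq_iff Rep_wc_inverse)
  have nto: "norm (to x) = norm x" for x
  proof -
    have "(\<Sum>j\<in>UNIV. (x $ Rep_wc j)\<^sup>2) = (\<Sum>i\<in>UNIV. (x $ i)\<^sup>2)"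
      using sum.reindex_bij_betw[of Rep_wc UNIV UNIV "\<lambda>i. (x $ i)\<^sup>2"] bR by (simp add: bij_def)
    then show ?thesis unfolding to_def by (simp add: norm_vec_def L2_set_def)
  qed
  have nfr: "norm (fr y) = norm y" for y by (metis nto tofr)
  have oV: "orthogonal_transformation (\<lambda>x. V *v x)"
    using V by (simp add: orthogonal_transformation_matrix)
  define f' where "f' = to \<circ> (\<lambda>x. V *v x) \<circ> fr"
  have of': "orthogonal_transformation f'"
  proof (unfold orthogonal_transformation, intro conjI allI)
    show "linear f'" unfolding f'_def
      using linear_compose[OF linear_compose[OF lfr orthogonal_transformation_linear[OF oV]] lto]
      by (simp add: comp_assoc)
    show "norm (f' v) = norm v" for v
      by (simp add: f'_def nto nfr orthogonal_transformation_norm[OF oV])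
  qed
  have df': "distr lborel borel f' = lborel" by (rule lborel_orth_wo[OF of'])
  have eq: "(\<lambda>x. V *v x) = fr \<circ> f' \<circ> to"
    by (auto simp: f'_def frto tofr fun_eq_iff)
  have m1: "to \<in> measurable lborel borel" using lin_meas[OF lto] by simp
  have m2: "f' \<in> measurable borel borel" using lin_meas[OF orthogonal_transformation_linear[OF of']] by simp
  have m3: "fr \<in> measurable borel borel" using lin_meas[OF lfr] by simp
  have "distr lborel borel (\<lambda>x. V *v x) = distr lborel borel (fr \<circ> f' \<circ> to)"
    unfolding eq[symmetric] ..
  also have "\<dots> = distr (distr (distr lborel borel to) borel f') borel fr"
    using m1 m2 m3 by (simp add: distr_distr comp_assoc)
  also have "\<dots> = lborel" by (simp add: dto df' dfr)
  finally show ?thesis .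
qed




lemma prod_Basis_cart:
  "(\<Prod>b\<in>(Basis :: (real^'n) set). G b) = (\<Prod>i\<in>UNIV. G (axis i 1))"
proof -
  have "(Basis :: (real^'n) set) = (\<lambda>i. axis i 1) ` UNIV" by (auto simp: Basis_vec_def)
  moreover have "inj (\<lambda>i::'n. axis i (1::real))" by (auto simp: inj_def axis_eq_axis)
  ultimately show ?thesis using prod.reindex[of "\<lambda>i::'n. axis i (1::real)" UNIV G] by (simp add: comp_def)
qed

lemma norm_sq_cart: "(norm (x::real^'n))^2 = (\<Sum>i\<in>UNIV. (x$i)^2)"
  by (simp add: norm_vec_def L2_set_def sum_nonneg)

lemma gauss_dens_prod: "gauss_dens (x::real^'n) = (\<Prod>i\<in>UNIV. std_normal_density (x$i))"
proof -
  have "(\<Prod>i\<in>UNIV. std_normal_density (x$i)) = (1/sqrt(2*pi))^CARD('n) * (\<Prod>i\<in>UNIV. exp (- ((x$i)^2) / 2))"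
    unfolding std_normal_density_def prod.distrib by simp
  also have "(\<Prod>i\<in>UNIV. exp (- ((x$i)^2) / 2)) = exp (- ((norm x)^2) / 2)"
    by (simp add: exp_sum[symmetric] norm_sq_cart sum_divide_distrib sum_negf)
  also have "(1/sqrt(2*pi))^CARD('n) = (2*pi) powr (- real CARD('n)/2)"
  proof -
    have "(1/sqrt(2*pi)) = (2*pi) powr (-1/2)"
      by (simp add: powr_half_sqrt[symmetric] powr_minus_divide)
    then have "(1/sqrt(2*pi))^CARD('n) = ((2*pi) powr (-1/2)) ^ CARD('n)" by simp
    also have "\<dots> = (2*pi) powr (real CARD('n) * (-1/2))"
      by (simp add: powr_power)
    finally show ?thesis by simp
  qed
  finally show ?thesis by (simp add: gauss_dens_def)
qed

lemma nn_gauss_prod: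
  fixes f :: "'n::finite \<Rightarrow> real \<Rightarrow> real"
  assumes meas: "\<And>i. f i \<in> borel_measurable borel" and nn: "\<And>i t. 0 \<le> f i t"
  shows "(\<integral>\<^sup>+x. ennreal (gauss_dens (x::real^'n) * (\<Prod>i\<in>UNIV. f i (x$i))) \<partial>lborel)
       = (\<Prod>i\<in>UNIV. \<integral>\<^sup>+t. ennreal (std_normal_density t * f i t) \<partial>lborel)"
proof -
  define F where "F b t = ennreal (std_normal_density t * f (axis_index b) t)" for b :: "real^'n" and t
  have "(\<integral>\<^sup>+x. (\<Prod>b\<in>Basis. F b (x \<bullet> b)) \<partial>lborel) = (\<Prod>b\<in>Basis. \<integral>\<^sup>+t. F b t \<partial>lborel)"
  proof (rule nn_integral_lborel_prod)
    fix b :: "real^'n"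
    note [measurable] = meas
    show "F b \<in> borel_measurable borel" unfolding F_def by measurable
  qed simp
  moreover have "(\<Prod>b\<in>Basis. F b (x \<bullet> b)) = ennreal (gauss_dens x * (\<Prod>i\<in>UNIV. f i (x$i)))" for x
    by (simp add: prod_Basis_cart F_def cart_eq_inner_axis[symmetric] gauss_dens_prod prod_ennreal prod.distrib nn)
  moreover have "(\<Prod>b\<in>Basis. \<integral>\<^sup>+t. F b t \<partial>lborel) = (\<Prod>i\<in>UNIV. \<integral>\<^sup>+t. ennreal(std_normal_density t * f i t) \<partial>lborel)"
    by (simp add: prod_Basis_cart F_def)
  ultimately show ?thesis by simp
qed

lemma nn_std_normal: "(\<integral>\<^sup>+t. ennreal (std_normal_density t) \<partial>lborel) = 1"
  by (subst nn_integral_eq_integral) auto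

lemma nn_std_normal_sq: "(\<integral>\<^sup>+t. ennreal (std_normal_density t * t^2) \<partial>lborel) = 1"
proof -
  have h: "has_bochner_integral lborel (\<lambda>x. std_normal_density x * x ^ (2 * 1)) (fact (2 * 1) / (2^1 * fact 1))"
    by (rule std_normal_moment_even)
  then have "integrable lborel (\<lambda>x. std_normal_density x * x ^ 2)" "integral\<^sup>L lborel (\<lambda>x. std_normal_density x * x ^ 2) = 1"
    by (auto simp: has_bochner_integral_iff)
  then show ?thesis by (subst nn_integral_eq_integral) auto
qed

lemma nn_std_normal_exp: "(\<integral>\<^sup>+t. ennreal (std_normal_density t * exp (t^2/4)) \<partial>lborel) = ennreal (sqrt 2)"
proof -
  have eq: "std_normal_density t * exp (t^2/4) = sqrt 2 * normal_density 0 (sqrt 2) t" for t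
  proof -
    have "exp (- t\<^sup>2 / 2) * exp (t^2/4) = exp (- t\<^sup>2 / 4)" by (simp add: exp_add[symmetric])
    moreover have "sqrt (2 * pi * (sqrt 2)\<^sup>2) = sqrt 2 * sqrt (2 * pi)"
      by (simp add: real_sqrt_mult[symmetric])
    ultimately show ?thesis
      by (simp add: std_normal_density_def normal_density_def field_simps)
  qed
  have "(\<integral>\<^sup>+t. ennreal (std_normal_density t * exp (t^2/4)) \<partial>lborel)
      = (\<integral>\<^sup>+t. ennreal (sqrt 2) * ennreal (normal_density 0 (sqrt 2) t) \<partial>lborel)"
    by (simp add: eq ennreal_mult)
  also have "\<dots> = ennreal (sqrt 2) * (\<integral>\<^sup>+t. ennreal (normal_density 0 (sqrt 2) t) \<partial>lborel)"
    by (rule nn_integral_cmult) auto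
  also have "(\<integral>\<^sup>+t. ennreal (normal_density 0 (sqrt 2) t) \<partial>lborel) = 1"
    by (subst nn_integral_eq_integral) auto
  finally show ?thesis by simp
qed

lemma gauss_dens_nonneg: "0 \<le> gauss_dens x"
  by (simp add: gauss_dens_def)

lemma gauss_dens_pos: "0 < gauss_dens x"
  by (simp add: gauss_dens_def)

lemma gauss_dens_meas[measurable]: "gauss_dens \<in> borel_measurable borel"
  unfolding gauss_dens_def by measurable

lemma sets_gauss[simp]: "sets gauss_measure = sets borel"
  by (simp add: gauss_measure_def)

lemma space_gauss[simp]: "space gauss_measure = UNIV"
  by (simp add: gauss_measure_def)

lemma nn_gauss_total: "(\<integral>\<^sup>+x. ennreal (gauss_dens (x::real^'n)) \<partial>lborel) = 1"
  using nn_gauss_prod[of "\<lambda>i t. 1"] by (simp add: nn_std_normal)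

lemma prob_gauss: "prob_space (gauss_measure :: (real^'n) measure)"
proof (rule prob_spaceI)
  show "emeasure gauss_measure (space gauss_measure) = 1"
    unfolding gauss_measure_def
    by (simp add: emeasure_density nn_gauss_total)
qed

lemma nn_gauss_exp: "(\<integral>\<^sup>+x. ennreal (gauss_dens (x::real^'n) * exp ((norm x)^2/4)) \<partial>lborel) < \<infinity>"
proof -
  have "exp ((norm x)^2/4) = (\<Prod>i\<in>UNIV. exp ((x$i)^2/4))" for x :: "real^'n"
    by (simp add: exp_sum[symmetric] norm_sq_cart sum_divide_distrib)
  then have "(\<integral>\<^sup>+x. ennreal (gauss_dens (x::real^'n) * exp ((norm x)^2/4)) \<partial>lborel)
     = (\<Prod>i\<in>(UNIV::'n set). ennreal (sqrt 2))"
    using nn_gauss_prod[of "\<lambda>i t. exp (t^2/4)"] by (simp add: nn_std_normal_exp)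
  also have "\<dots> < \<infinity>" by (simp add: ennreal_power)
  finally show ?thesis .
qed

lemma gauss_second_moment: "integral\<^sup>L gauss_measure (\<lambda>x::real^'n. (x$i)^2) = 1"
proof -
  have "integral\<^sup>L gauss_measure (\<lambda>x::real^'n. (x$i)^2) = integral\<^sup>L lborel (\<lambda>x. gauss_dens x * (x$i)^2)"
    unfolding gauss_measure_def by (subst integral_density) (auto simp: gauss_dens_nonneg)
  also have "\<dots> = enn2real (\<integral>\<^sup>+x. ennreal (gauss_dens x * (x$i)^2) \<partial>lborel)"
    by (rule integral_eq_nn_integral) (auto simp: gauss_dens_nonneg)
  also have "(\<integral>\<^sup>+x. ennreal (gauss_dens x * (x$i)^2) \<partial>lborel) = 1"
  proof -
    have "(\<Prod>j\<in>UNIV. (if j = i then (x$j)^2 else 1)) = (x$i)^2" for x :: "real^'n"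
      by (simp add: prod.delta)
    then have "(\<integral>\<^sup>+x. ennreal (gauss_dens x * (x$i)^2) \<partial>lborel)
       = (\<Prod>j\<in>UNIV. \<integral>\<^sup>+t. ennreal (std_normal_density t * (if j = i then t^2 else 1)) \<partial>lborel)"
      using nn_gauss_prod[of "\<lambda>j t. if j = i then t^2 else 1"] by simp
      also have "\<dots> = (\<Prod>j\<in>(UNIV::'n set). (1::ennreal))"
    proof (intro prod.cong refl)
      fix j :: 'n
      show "(\<integral>\<^sup>+t. ennreal (std_normal_density t * (if j = i then t^2 else 1)) \<partial>lborel) = 1"
        by (cases "j = i") (simp_all add: nn_std_normal nn_std_normal_sq)
    qed
    finally show ?thesis by simp
  qed
  finally show ?thesis by simp
qed




definition wt :: "real^'n \<Rightarrow> real" where "wt x = exp ((norm x)^2 / 8)"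

lemma wt_ge1: "1 \<le> wt x" by (simp add: wt_def)
lemma wt_pos: "0 < wt x" by (simp add: wt_def)
lemma wt_sq: "(wt x)^2 = exp ((norm x)^2 / 4)"
  by (simp add: wt_def power2_eq_square exp_add[symmetric])
lemma wt_le_sq: "wt x \<le> (wt x)^2"
  using wt_ge1[of x] by (simp add: power2_eq_square)
lemma wt_meas[measurable]: "wt \<in> borel_measurable borel"
  unfolding wt_def by measurable

lemma gauss_int_sq: "integrable gauss_measure (\<lambda>x::real^'n. (wt x)^2)"
proof -
  have "integrable lborel (\<lambda>x::real^'n. gauss_dens x * exp ((norm x)^2/4))"
    by (rule integrableI_nonneg) (use nn_gauss_exp[where 'n='n] in \<open>auto simp: gauss_dens_nonneg infinity_ennreal_def\<close>)
  then show ?thesis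
    unfolding gauss_measure_def wt_sq
    by (subst integrable_density) (auto simp: gauss_dens_nonneg)
qed

lemma gauss_int_bound:
  fixes f :: "real^'n \<Rightarrow> 'b::{banach, second_countable_topology}"
  assumes f: "f \<in> borel_measurable borel" and b: "\<And>x. norm (f x) \<le> C * (wt x)^2"
  shows "integrable gauss_measure f"
proof (rule Bochner_Integration.integrable_bound)
  show "integrable gauss_measure (\<lambda>x. C * (wt x)^2)"
    using gauss_int_sq by (rule integrable_mult_right)
  show "f \<in> borel_measurable gauss_measure" using f by (simp only: measurable_cong_sets[OF sets_gauss refl])
  show "AE x in gauss_measure. norm (f x) \<le> norm (C * (wt x)^2)"
  proof (rule AE_I2)
    fix x
    show "norm (f x) \<le> norm (C * (wt x)^2)"
      using b[of x] abs_ge_self[of "C * (wt x)^2"] unfolding real_norm_def by linarith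
  qed
qed

lemma gauss_int_wt: "integrable gauss_measure (\<lambda>x::real^'n. wt x)"
  by (rule gauss_int_bound[where C=1]) (simp_all add: wt_le_sq abs_of_pos wt_pos)

lemma exp_ge_pow: "0 \<le> x \<Longrightarrow> x^n / fact n \<le> exp (x::real)"
proof -
  assume x: "0 \<le> x"
  have s: "(\<lambda>k. x^k /\<^sub>R fact k) sums exp x" by (rule exp_converges)
  have sm: "summable (\<lambda>k. x^k /\<^sub>R fact k)" using s by (rule sums_summable)
  have "sum (\<lambda>k. x^k /\<^sub>R fact k) {n} \<le> suminf (\<lambda>k. x^k /\<^sub>R fact k)"
    by (rule sum_le_suminf[OF sm]) (simp_all add: x)
  also have "suminf (\<lambda>k. x^k /\<^sub>R fact k) = exp x" using sums_unique[OF s] by simp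
  finally show ?thesis by (simp add: divide_inverse mult.commute)
qed

lemma lin_wt: "0 \<le> t \<Longrightarrow> t \<le> 2 * exp ((t::real)^2/8)"
proof -
  assume "0 \<le> t"
  have "0 \<le> (t - 4)^2 / 8" by simp
  then have "t \<le> 2 + t^2/8" by (simp add: power2_eq_square algebra_simps)
  moreover have "0 \<le> t^2/8" by simp
  ultimately show ?thesis using exp_ge_add_one_self[of "t^2/8"] by linarith
qed

lemma powr_wt:
  fixes m :: real
  assumes m: "0 \<le> m"
  shows "\<exists>C>0. \<forall>t::real\<ge>0. t powr m \<le> C * exp (t^2/8)"
proof -
  define n where "n = nat \<lceil>m\<rceil>"
  have mn: "m \<le> real n" unfolding n_def by linarith
  define C :: real where "C = 2 + 8^n * fact n"
  have Cpos: "C > 0" unfolding C_def by (simp add: add_pos_nonneg)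
  have "t powr m \<le> C * exp (t^2/8)" if t: "t \<ge> 0" for t
  proof -
    have e: "(t^2/8)^n / fact n \<le> exp (t^2/8)" by (rule exp_ge_pow) simp
    have "(t^2)^n \<le> 8^n * fact n * exp (t^2/8)"
      using e by (simp add: power_divide field_simps)
    then have t2n: "t^(2*n) \<le> 8^n * fact n * exp (t^2/8)"
      by (simp add: power_mult)
    have tp: "t powr m \<le> 1 + t^n"
    proof (cases "t \<le> 1")
      case True
      then have "t powr m \<le> 1"
        using t m True by (intro powr_le1) auto
      then show ?thesis using t zero_le_power[of t n] by linarith
    next
      case False
      then have "t powr m \<le> t powr (real n)" using mn by (intro powr_mono) auto
      also have "\<dots> = t^n" using False by (simp add: powr_realpow)
      finally show ?thesis by simp
    qed
    have "t^n \<le> 1 + t^(2*n)"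
    proof (cases "t \<le> 1")
      case True
      then have "t^n \<le> 1" using t by (simp add: power_le_one)
      moreover have "0 \<le> t^(2*n)" using t by simp
      ultimately show ?thesis by linarith
    next
      case False
      then have "t^n \<le> t^(2*n)" by (intro power_increasing) auto
      then show ?thesis by simp
    qed
    then have "t powr m \<le> 2 + 8^n * fact n * exp (t^2/8)" using tp t2n by linarith
    also have "\<dots> \<le> 2 * exp (t^2/8) + 8^n * fact n * exp (t^2/8)"
    proof -
      have "1 \<le> exp (t^2/8)" by simp
      then show ?thesis by linarith
    qed
    also have "\<dots> = C * exp (t^2/8)" by (simp add: C_def algebra_simps)
    finally show ?thesis .
  qed
  then show ?thesis using Cpos by blast
qed




definition swp :: "'n::finite \<Rightarrow> ((real^'n) \<times> (real^'n)) \<Rightarrow> ((real^'n) \<times> (real^'n))" where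
  "swp i z = (upd_coord (snd z) i (fst z $ i), upd_coord (fst z) i (snd z $ i))"

lemma upd_coord_nth: "upd_coord y i t $ j = (if j = i then t else y $ j)"
  by (simp add: upd_coord_def)

lemma upd_coord_alt: "upd_coord y i t = y + (t - y$i) *\<^sub>R axis i 1"
  by (simp add: vec_eq_iff upd_coord_def axis_def)

lemma all_if_split:
  "(\<forall>j. P j (if j = i then s else t j)) \<longleftrightarrow> P i s \<and> (\<forall>j. j \<noteq> i \<longrightarrow> P j (t j))"
proof
  assume H: "\<forall>j. P j (if j = i then s else t j)"
  have "P i s" using H[rule_format, of i] by simp
  moreover have "\<forall>j. j \<noteq> i \<longrightarrow> P j (t j)"
  proof (intro allI impI)
    fix j assume "j \<noteq> i" then show "P j (t j)" using H[rule_format, of j] by simp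
  qed
  ultimately show "P i s \<and> (\<forall>j. j \<noteq> i \<longrightarrow> P j (t j))" ..
next
  assume H: "P i s \<and> (\<forall>j. j \<noteq> i \<longrightarrow> P j (t j))"
  show "\<forall>j. P j (if j = i then s else t j)"
  proof
    fix j show "P j (if j = i then s else t j)" using H by (cases "j = i") simp_all
  qed
qed

lemma swp_pre:
  fixes a b c d :: "real^'n"
  shows "swp i -` (box a b \<times> box c d) =
    box (upd_coord c i (a$i)) (upd_coord d i (b$i)) \<times> box (upd_coord a i (c$i)) (upd_coord b i (d$i))"
proof -
  have "((x, y) \<in> swp i -` (box a b \<times> box c d)) \<longleftrightarrow>
        ((x, y) \<in> box (upd_coord c i (a$i)) (upd_coord d i (b$i)) \<times> box (upd_coord a i (c$i)) (upd_coord b i (d$i)))"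
    for x y :: "real^'n"
  proof -
    have L: "((x, y) \<in> swp i -` (box a b \<times> box c d)) \<longleftrightarrow>
      (a$i < x$i \<and> x$i < b$i) \<and> (\<forall>j. j \<noteq> i \<longrightarrow> a$j < y$j \<and> y$j < b$j) \<and>
      (c$i < y$i \<and> y$i < d$i) \<and> (\<forall>j. j \<noteq> i \<longrightarrow> c$j < x$j \<and> x$j < d$j)"
      unfolding swp_def vimage_def mem_Collect_eq fst_conv snd_conv mem_Times_iff mem_box_cart upd_coord_nth
      by (simp only: all_if_split[where P="\<lambda>j v. a$j < v \<and> v < b$j"] all_if_split[where P="\<lambda>j v. c$j < v \<and> v < d$j"] conj_assoc)
    have R: "((x, y) \<in> box (upd_coord c i (a$i)) (upd_coord d i (b$i)) \<times> box (upd_coord a i (c$i)) (upd_coord b i (d$i))) \<longleftrightarrow>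
      (a$i < x$i \<and> x$i < b$i) \<and> (\<forall>j. j \<noteq> i \<longrightarrow> c$j < x$j \<and> x$j < d$j) \<and>
      (c$i < y$i \<and> y$i < d$i) \<and> (\<forall>j. j \<noteq> i \<longrightarrow> a$j < y$j \<and> y$j < b$j)"
    proof -
      have 1: "(\<forall>j. (if j = i then a$i else c$j) < x$j \<and> x$j < (if j = i then b$i else d$j)) \<longleftrightarrow>
          (a$i < x$i \<and> x$i < b$i) \<and> (\<forall>j. j \<noteq> i \<longrightarrow> c$j < x$j \<and> x$j < d$j)"
        by (auto split: if_splits)
      have 2: "(\<forall>j. (if j = i then c$i else a$j) < y$j \<and> y$j < (if j = i then d$i else b$j)) \<longleftrightarrow>
          (c$i < y$i \<and> y$i < d$i) \<and> (\<forall>j. j \<noteq> i \<longrightarrow> a$j < y$j \<and> y$j < b$j)"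
        by (auto split: if_splits)
      show ?thesis unfolding mem_Times_iff fst_conv snd_conv mem_box_cart upd_coord_nth 1 2 by (simp only: conj_assoc)
    qed
    show ?thesis unfolding L R by blast
  qed
  note H = this
  show ?thesis
  proof (intro set_eqI)
    fix z :: "(real^'n) \<times> (real^'n)"
    show "z \<in> swp i -` (box a b \<times> box c d) \<longleftrightarrow> z \<in> box (upd_coord c i (a$i)) (upd_coord d i (b$i)) \<times> box (upd_coord a i (c$i)) (upd_coord b i (d$i))"
      using H[of "fst z" "snd z"] by simp
  qed
qed




lemma swp_linear: "linear (swp (i::'n::finite))"
proof (rule linearI)
  fix x y :: "(real^'n) \<times> (real^'n)" and r :: real
  show "swp i (x + y) = swp i x + swp i y"
    by (simp add: swp_def upd_coord_def vec_eq_iff)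
  show "swp i (r *\<^sub>R x) = r *\<^sub>R swp i x"
    by (simp add: swp_def upd_coord_def vec_eq_iff)
qed

lemma lborel_swp: "distr lborel borel (swp i) = (lborel :: ((real^'n) \<times> (real^'n)) measure)"
proof (rule lborel_eqI[symmetric])
  show "sets (distr lborel borel (swp i)) = sets (borel :: ((real^'n) \<times> (real^'n)) measure)" by simp
next
  fix l u :: "(real^'n) \<times> (real^'n)"
  assume lu: "\<And>b. b \<in> Basis \<Longrightarrow> l \<bullet> b \<le> u \<bullet> b"
  obtain a c where l: "l = (a, c)" by (cases l)
  obtain b d where u: "u = (b, d)" by (cases u)
  have ab: "a$j \<le> b$j" for j
  proof -
    have "(axis j (1::real), 0::real^'n) \<in> Basis" by (auto simp: Basis_prod_def Basis_vec_def)
    from lu[OF this] show ?thesis by (simp add: l u cart_eq_inner_axis)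
  qed
  have cd: "c$j \<le> d$j" for j
  proof -
    have "(0::real^'n, axis j (1::real)) \<in> Basis" by (auto simp: Basis_prod_def Basis_vec_def)
    from lu[OF this] show ?thesis by (simp add: l u cart_eq_inner_axis)
  qed
  have fm: "swp i \<in> borel_measurable borel" by (rule lin_meas[OF swp_linear])
  have bx: "box l u = box a b \<times> box c d" by (simp add: l u box_prod)
  let ?A = "box (upd_coord c i (a$i)) (upd_coord d i (b$i))"
  let ?B = "box (upd_coord a i (c$i)) (upd_coord b i (d$i))"
  have eA: "emeasure lborel ?A = ennreal (\<Prod>j\<in>UNIV. (if j = i then b$i - a$i else d$j - c$j))"
  proof -
    have "emeasure lborel ?A = ennreal (\<Prod>j\<in>UNIV. (upd_coord d i (b$i)) $ j - (upd_coord c i (a$i)) $ j)"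
      by (rule emeasure_lborel_box_cart) (use ab cd in \<open>auto simp: upd_coord_nth\<close>)
    also have "\<dots> = ennreal (\<Prod>j\<in>UNIV. (if j = i then b$i - a$i else d$j - c$j))"
      by (intro arg_cong[where f=ennreal] prod.cong refl) (simp add: upd_coord_nth)
    finally show ?thesis .
  qed
  have eB: "emeasure lborel ?B = ennreal (\<Prod>j\<in>UNIV. (if j = i then d$i - c$i else b$j - a$j))"
  proof -
    have "emeasure lborel ?B = ennreal (\<Prod>j\<in>UNIV. (upd_coord b i (d$i)) $ j - (upd_coord a i (c$i)) $ j)"
      by (rule emeasure_lborel_box_cart) (use ab cd in \<open>auto simp: upd_coord_nth\<close>)
    also have "\<dots> = ennreal (\<Prod>j\<in>UNIV. (if j = i then d$i - c$i else b$j - a$j))"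
      by (intro arg_cong[where f=ennreal] prod.cong refl) (simp add: upd_coord_nth)
    finally show ?thesis .
  qed
  have e1: "emeasure lborel (box a b) = ennreal (\<Prod>j\<in>UNIV. b$j - a$j)"
    by (rule emeasure_lborel_box_cart) (use ab in auto)
  have e2: "emeasure lborel (box c d) = ennreal (\<Prod>j\<in>UNIV. d$j - c$j)"
    by (rule emeasure_lborel_box_cart) (use cd in auto)
  have prodeq: "(\<Prod>j\<in>UNIV. (if j = i then b$i - a$i else d$j - c$j)) * (\<Prod>j\<in>UNIV. (if j = i then d$i - c$i else b$j - a$j))
      = (\<Prod>j\<in>UNIV. b$j - a$j) * (\<Prod>j\<in>UNIV. d$j - c$j)"
  proof -
    have "(\<Prod>j\<in>UNIV. (if j = i then b$i - a$i else d$j - c$j)) * (\<Prod>j\<in>UNIV. (if j = i then d$i - c$i else b$j - a$j))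
        = (\<Prod>j\<in>UNIV. (if j = i then b$i - a$i else d$j - c$j) * (if j = i then d$i - c$i else b$j - a$j))"
      by (simp only: prod.distrib)
    also have "\<dots> = (\<Prod>j\<in>UNIV. (b$j - a$j) * (d$j - c$j))"
      by (intro prod.cong refl) auto
    also have "\<dots> = (\<Prod>j\<in>UNIV. b$j - a$j) * (\<Prod>j\<in>UNIV. d$j - c$j)"
      by (simp only: prod.distrib)
    finally show ?thesis .
  qed
  have nn1: "0 \<le> (\<Prod>j\<in>UNIV. (if j = i then b$i - a$i else d$j - c$j))"
    by (rule prod_nonneg) (use ab cd in auto)
  have nn2: "0 \<le> (\<Prod>j\<in>UNIV. (if j = i then d$i - c$i else b$j - a$j))"
    by (rule prod_nonneg) (use ab cd in auto)
  have nn3: "0 \<le> (\<Prod>j\<in>UNIV. b$j - a$j)" by (rule prod_nonneg) (use ab in auto)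
  have nn4: "0 \<le> (\<Prod>j\<in>UNIV. d$j - c$j)" by (rule prod_nonneg) (use cd in auto)
  have "emeasure (distr lborel borel (swp i)) (box l u) = emeasure lborel (swp i -` box l u)"
    using fm by (subst emeasure_distr) auto
  also have "\<dots> = emeasure (lborel \<Otimes>\<^sub>M lborel) (?A \<times> ?B)"
    by (simp add: bx swp_pre lborel_prod)
  also have "\<dots> = emeasure lborel ?A * emeasure lborel ?B"
    by (rule lborel.emeasure_pair_measure_Times) auto
  also have "\<dots> = emeasure lborel (box a b) * emeasure lborel (box c d)"
    unfolding eA eB e1 e2 using prodeq nn1 nn2 nn3 nn4 by (simp add: ennreal_mult[symmetric])
  also have "\<dots> = emeasure (lborel \<Otimes>\<^sub>M lborel) (box a b \<times> box c d)"
    by (rule lborel.emeasure_pair_measure_Times[symmetric]) auto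
  also have "\<dots> = emeasure lborel (box l u)"
    by (simp add: bx lborel_prod)
  also have "\<dots> = (\<Prod>b\<in>Basis. (u - l) \<bullet> b)"
    using lu by simp
  finally show "emeasure (distr lborel borel (swp i)) (box l u) = (\<Prod>b\<in>Basis. (u - l) \<bullet> b)" .
qed




lemma sets_GG: "sets (gauss_measure \<Otimes>\<^sub>M gauss_measure) = sets (borel :: ((real^'n) \<times> (real^'n)) measure)"
proof -
  have "sets (gauss_measure \<Otimes>\<^sub>M gauss_measure) = sets ((borel :: (real^'n) measure) \<Otimes>\<^sub>M borel)"
    by (rule sets_pair_measure_cong) simp_all
  then show ?thesis by (simp only: borel_prod)
qed

lemma meas_GG: "measurable (gauss_measure \<Otimes>\<^sub>M gauss_measure) N = measurable (borel :: ((real^'n) \<times> (real^'n)) measure) N"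
  by (rule measurable_cong_sets[OF sets_GG refl])

lemma meas_G: "measurable (gauss_measure :: (real^'n) measure) N = measurable borel N"
  by (rule measurable_cong_sets[OF sets_gauss refl])

lemma cont_meas: "continuous_on UNIV f \<Longrightarrow> f \<in> borel_measurable borel"
  by (rule borel_measurable_continuous_onI)

lemma cont_wt: "continuous_on UNIV wt"
  unfolding wt_def by (intro continuous_intros) auto

lemma pair_int_wt:
  "integrable (gauss_measure \<Otimes>\<^sub>M gauss_measure) (\<lambda>z::(real^'n) \<times> (real^'n). (wt (fst z))^2 * (wt (snd z))^2)"
proof -
  interpret G: prob_space "gauss_measure :: (real^'n) measure" by (rule prob_gauss)
  define I where "I = (\<integral>\<^sup>+x. ennreal ((wt x)^2) \<partial>(gauss_measure :: (real^'n) measure))"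
  have I: "I = ennreal (integral\<^sup>L gauss_measure (\<lambda>x::real^'n. (wt x)^2))"
    unfolding I_def by (rule nn_integral_eq_integral[OF gauss_int_sq]) simp
  have mw: "(\<lambda>y. ennreal ((wt y)^2)) \<in> borel_measurable (gauss_measure :: (real^'n) measure)"
    unfolding meas_G by measurable
  have cz: "continuous_on UNIV (\<lambda>z::(real^'n) \<times> (real^'n). (wt (fst z))^2 * (wt (snd z))^2)"
    by (intro continuous_intros continuous_on_compose2[OF cont_wt]) auto
  have mz: "(\<lambda>z::(real^'n) \<times> (real^'n). (wt (fst z))^2 * (wt (snd z))^2) \<in> borel_measurable (gauss_measure \<Otimes>\<^sub>M gauss_measure)"
    unfolding meas_GG by (rule cont_meas[OF cz])
  have mz': "(\<lambda>z::(real^'n) \<times> (real^'n). ennreal ((wt (fst z))^2 * (wt (snd z))^2)) \<in> borel_measurable (gauss_measure \<Otimes>\<^sub>M gauss_measure)"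
    using mz by measurable
  have "(\<integral>\<^sup>+z. ennreal ((wt (fst (z::(real^'n) \<times> (real^'n))))^2 * (wt (snd z))^2) \<partial>(gauss_measure \<Otimes>\<^sub>M gauss_measure))
      = (\<integral>\<^sup>+x. \<integral>\<^sup>+y. ennreal ((wt (x::real^'n))^2 * (wt (y::real^'n))^2) \<partial>gauss_measure \<partial>(gauss_measure :: (real^'n) measure))"
  proof -
    have "(\<integral>\<^sup>+x. \<integral>\<^sup>+y. ennreal ((wt (x::real^'n))^2 * (wt (y::real^'n))^2) \<partial>gauss_measure \<partial>(gauss_measure :: (real^'n) measure))
      = (\<integral>\<^sup>+z. ennreal ((wt (fst (z::(real^'n) \<times> (real^'n))))^2 * (wt (snd z))^2) \<partial>(gauss_measure \<Otimes>\<^sub>M (gauss_measure :: (real^'n) measure)))"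
      using G.nn_integral_fst[OF mz'] by (simp only: fst_conv snd_conv)
    then show ?thesis by (rule sym)
  qed
  also have "\<dots> = (\<integral>\<^sup>+x. ennreal ((wt x)^2) * I \<partial>(gauss_measure :: (real^'n) measure))"
    unfolding I_def by (simp add: ennreal_mult nn_integral_cmult[OF mw])
  also have "\<dots> = I * I"
    unfolding I_def by (simp add: nn_integral_multc[OF mw])
  also have "\<dots> < \<infinity>" unfolding I by (simp add: ennreal_mult[symmetric])
  finally have fin: "(\<integral>\<^sup>+z. ennreal ((wt (fst (z::(real^'n) \<times> (real^'n))))^2 * (wt (snd z))^2) \<partial>(gauss_measure \<Otimes>\<^sub>M gauss_measure)) < \<infinity>" .
  show ?thesis
    by (rule integrableI_nonneg[OF mz]) (use fin in \<open>auto simp: infinity_ennreal_def\<close>)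
qed

lemma pair_int_bound:
  fixes f :: "(real^'n) \<times> (real^'n) \<Rightarrow> real"
  assumes f: "f \<in> borel_measurable borel" and b: "\<And>z. \<bar>f z\<bar> \<le> C * (wt (fst z))^2 * (wt (snd z))^2"
  shows "integrable (gauss_measure \<Otimes>\<^sub>M gauss_measure) f"
proof (rule Bochner_Integration.integrable_bound)
  show "integrable (gauss_measure \<Otimes>\<^sub>M gauss_measure) (\<lambda>z::(real^'n) \<times> (real^'n). C * ((wt (fst z))^2 * (wt (snd z))^2))"
    by (rule integrable_mult_right) (rule pair_int_wt)
  show "f \<in> borel_measurable (gauss_measure \<Otimes>\<^sub>M gauss_measure)" unfolding meas_GG by (rule f)
  show "AE z in gauss_measure \<Otimes>\<^sub>M (gauss_measure :: (real^'n) measure). norm (f z) \<le> norm (C * ((wt (fst z))^2 * (wt (snd z))^2))"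
  proof (rule AE_I2)
    fix z :: "(real^'n) \<times> (real^'n)"
    show "norm (f z) \<le> norm (C * ((wt (fst z))^2 * (wt (snd z))^2))"
      using b[of z] abs_ge_self[of "C * ((wt (fst z))^2 * (wt (snd z))^2)"] unfolding real_norm_def
      by (simp add: mult.assoc)
  qed
qed




lemma GG_density:
  "(gauss_measure \<Otimes>\<^sub>M gauss_measure :: ((real^'n) \<times> (real^'n)) measure)
    = density lborel (\<lambda>z. ennreal (gauss_dens (fst z) * gauss_dens (snd z)))"
proof -
  have sf: "sigma_finite_measure (density lborel (\<lambda>x::real^'n. ennreal (gauss_dens x)))"
    using prob_space_imp_sigma_finite[OF prob_gauss] unfolding gauss_measure_def .
  have "(gauss_measure \<Otimes>\<^sub>M gauss_measure :: ((real^'n) \<times> (real^'n)) measure)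
     = density (lborel \<Otimes>\<^sub>M lborel) (\<lambda>(x,y). ennreal (gauss_dens x) * ennreal (gauss_dens y))"
    unfolding gauss_measure_def
    by (rule pair_measure_density) (auto simp: sf lborel.sigma_finite_measure_axioms)
  also have "\<dots> = density lborel (\<lambda>z. ennreal (gauss_dens (fst z) * gauss_dens (snd z)))"
  proof -
    have "(\<lambda>(x,y). ennreal (gauss_dens x) * ennreal (gauss_dens y)) = (\<lambda>z::(real^'n) \<times> (real^'n). ennreal (gauss_dens (fst z) * gauss_dens (snd z)))"
      by (auto simp: fun_eq_iff ennreal_mult gauss_dens_nonneg)
    then show ?thesis by (simp add: lborel_prod)
  qed
  finally show ?thesis .
qed

lemma gd_swp:
  "gauss_dens (fst (swp i z)) * gauss_dens (snd (swp i z)) = gauss_dens (fst z) * gauss_dens (snd (z :: (real^'n) \<times> (real^'n)))"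
proof -
  obtain x y where z: "z = (x, y)" by (cases z)
  have "gauss_dens (upd_coord y i (x$i)) * gauss_dens (upd_coord x i (y$i))
      = (\<Prod>j\<in>UNIV. std_normal_density (upd_coord y i (x$i) $ j) * std_normal_density (upd_coord x i (y$i) $ j))"
    by (simp add: gauss_dens_prod prod.distrib)
  also have "\<dots> = (\<Prod>j\<in>UNIV. std_normal_density (x $ j) * std_normal_density (y $ j))"
    by (intro prod.cong refl) (simp add: upd_coord_nth)
  also have "\<dots> = gauss_dens x * gauss_dens y"
    by (simp add: gauss_dens_prod prod.distrib)
  finally show ?thesis by (simp add: z swp_def)
qed

lemma swap_integral:
  fixes f :: "(real^'n) \<times> (real^'n) \<Rightarrow> real"
  assumes f: "f \<in> borel_measurable borel"
  shows "integral\<^sup>L (gauss_measure \<Otimes>\<^sub>M gauss_measure) (\<lambda>z. f (swp i z)) = integral\<^sup>L (gauss_measure \<Otimes>\<^sub>M gauss_measure) f"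
proof -
  define D where "D z = gauss_dens (fst z) * gauss_dens (snd z)" for z :: "(real^'n) \<times> (real^'n)"
  have Dm: "D \<in> borel_measurable borel" unfolding D_def borel_prod[symmetric] by measurable
  have Dnn: "0 \<le> D z" for z unfolding D_def by (simp add: gauss_dens_nonneg)
  have sm: "swp i \<in> borel_measurable borel" by (rule lin_meas[OF swp_linear])
  have Dswp: "D (swp i z) = D z" for z unfolding D_def by (rule gd_swp)
  have fs: "(\<lambda>z. f (swp i z)) \<in> borel_measurable borel" using f sm by (rule measurable_compose[rotated])
  have "integral\<^sup>L (gauss_measure \<Otimes>\<^sub>M gauss_measure) (\<lambda>z. f (swp i z))
      = integral\<^sup>L lborel (\<lambda>z. D z * f (swp i z))"
    unfolding GG_density D_def[symmetric]
    by (subst integral_density) (use fs Dm Dnn in auto)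
  also have "\<dots> = integral\<^sup>L lborel (\<lambda>z. D (swp i z) * f (swp i z))"
    by (simp add: Dswp)
  also have "\<dots> = integral\<^sup>L (distr lborel borel (swp i)) (\<lambda>z. D z * f z)"
    by (rule integral_distr[symmetric]) (use sm f Dm in auto)
  also have "\<dots> = integral\<^sup>L lborel (\<lambda>z. D z * f z)"
    by (simp add: lborel_swp)
  also have "\<dots> = integral\<^sup>L (gauss_measure \<Otimes>\<^sub>M gauss_measure) f"
    unfolding GG_density D_def[symmetric]
    by (subst integral_density) (use f Dm Dnn in auto)
  finally show ?thesis .
qed




lemma wt_upd: "wt (upd_coord y i (x$i)) \<le> wt x * wt (y::real^'n)"
proof -
  have "(norm (upd_coord y i (x$i)))^2 = (\<Sum>j\<in>UNIV. (if j = i then (x$i)^2 else (y$j)^2))"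
    unfolding norm_sq_cart by (intro sum.cong refl) (simp add: upd_coord_nth)
  also have "\<dots> \<le> (\<Sum>j\<in>UNIV. (x$j)^2 + (y$j)^2)"
    by (intro sum_mono) auto
  also have "\<dots> = (norm x)^2 + (norm y)^2"
    by (simp add: norm_sq_cart sum.distrib)
  finally have "(norm (upd_coord y i (x$i)))^2 / 8 \<le> (norm x)^2 / 8 + (norm y)^2 / 8"
    by (simp add: add_divide_distrib[symmetric] divide_right_mono)
  then show ?thesis unfolding wt_def by (simp add: exp_add[symmetric])
qed

lemma comp_wt: "\<bar>x$i\<bar> \<le> 2 * wt (x::real^'n)"
  using component_le_norm_cart[of x i] lin_wt[of "norm x"] unfolding wt_def by simp

lemma cont_upd: "continuous_on UNIV (\<lambda>z::(real^'n) \<times> (real^'n). upd_coord (snd z) i (fst z $ i))"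
  unfolding upd_coord_alt by (intro continuous_intros)

lemma K_nonneg: fixes h :: "real^'n \<Rightarrow> real" assumes hb: "\<And>z. \<bar>h z\<bar> \<le> K * wt z" shows "0 \<le> K"
proof -
  have "0 \<le> K * wt (0::real^'n)" using hb[of 0] abs_ge_zero[of "h 0"] by linarith
  then show ?thesis using wt_pos[of "0::real^'n"] by (simp add: zero_le_mult_iff)
qed

lemma fubini_swap:
  fixes h :: "real^'n \<Rightarrow> real"
  assumes hc: "continuous_on UNIV h" and hb: "\<And>z. \<bar>h z\<bar> \<le> K * wt z"
  shows "integral\<^sup>L gauss_measure (\<lambda>x. x$i * integral\<^sup>L gauss_measure (\<lambda>y. h (upd_coord y i (x$i))))
       = integral\<^sup>L gauss_measure (\<lambda>z. z$i * h z)"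
proof -
  interpret G: prob_space "gauss_measure :: (real^'n) measure" by (rule prob_gauss)
  interpret GG: pair_sigma_finite "gauss_measure :: (real^'n) measure" "gauss_measure :: (real^'n) measure"
    by (simp add: pair_sigma_finite_def prob_space_imp_sigma_finite prob_gauss)
  have K: "0 \<le> K" by (rule K_nonneg[OF hb])
  define k where "k z = fst z $ i * h (upd_coord (snd z) i (fst z $ i))" for z :: "(real^'n) \<times> (real^'n)"
  define k0 where "k0 z = fst z $ i * h (fst z)" for z :: "(real^'n) \<times> (real^'n)"
  have kk0: "k z = k0 (swp i z)" for z
    by (simp add: k_def k0_def swp_def upd_coord_nth)
  have ck: "continuous_on UNIV k" unfolding k_def
    by (intro continuous_intros continuous_on_compose2[OF hc cont_upd]) auto
  have ck0: "continuous_on UNIV k0" unfolding k0_def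
    by (intro continuous_intros continuous_on_compose2[OF hc]) auto
  have kb: "\<bar>k z\<bar> \<le> (2*K) * (wt (fst z))^2 * (wt (snd z))^2" for z
  proof -
    obtain x y where z: "z = (x, y)" by (cases z)
    have a1: "\<bar>x$i\<bar> \<le> 2 * wt x" by (rule comp_wt)
    have a2: "\<bar>h (upd_coord y i (x$i))\<bar> \<le> K * (wt x * wt y)"
      using hb[of "upd_coord y i (x$i)"] mult_left_mono[OF wt_upd[of y i x] K] by linarith
    have "\<bar>k z\<bar> = \<bar>x$i\<bar> * \<bar>h (upd_coord y i (x$i))\<bar>" by (simp add: k_def z abs_mult)
    also have "\<dots> \<le> (2 * wt x) * (K * (wt x * wt y))"
      by (rule mult_mono[OF a1 a2]) (use wt_pos[of x] in auto)
    also have "\<dots> = (2*K) * (wt x)^2 * wt y" by (simp add: power2_eq_square)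
    also have "\<dots> \<le> (2*K) * (wt x)^2 * (wt y)^2"
      by (rule mult_left_mono[OF wt_le_sq]) (use K in simp)
    finally show ?thesis by (simp add: z)
  qed
  have k0b: "\<bar>k0 z\<bar> \<le> (2*K) * (wt (fst z))^2 * (wt (snd z))^2" for z
  proof -
    obtain x y where z: "z = (x, y)" by (cases z)
    have a1: "\<bar>x$i\<bar> \<le> 2 * wt x" by (rule comp_wt)
    have a2: "\<bar>h x\<bar> \<le> K * wt x" by (rule hb)
    have "\<bar>k0 z\<bar> = \<bar>x$i\<bar> * \<bar>h x\<bar>" by (simp add: k0_def z abs_mult)
    also have "\<dots> \<le> (2 * wt x) * (K * wt x)"
      by (rule mult_mono[OF a1 a2]) (use wt_pos[of x] in auto)
    also have "\<dots> = (2*K) * (wt x)^2 * 1" by (simp add: power2_eq_square)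
    also have "\<dots> \<le> (2*K) * (wt x)^2 * (wt y)^2"
    proof (rule mult_left_mono)
      show "1 \<le> (wt y)^2" using wt_ge1[of y] by (simp add: one_le_power)
    qed (use K in simp)
    finally show ?thesis by (simp add: z)
  qed
  have ik: "integrable (gauss_measure \<Otimes>\<^sub>M gauss_measure) k"
    by (rule pair_int_bound[OF cont_meas[OF ck] kb])
  have ik0: "integrable (gauss_measure \<Otimes>\<^sub>M gauss_measure) k0"
    by (rule pair_int_bound[OF cont_meas[OF ck0] k0b])
  have "integral\<^sup>L gauss_measure (\<lambda>x. x$i * integral\<^sup>L gauss_measure (\<lambda>y. h (upd_coord y i (x$i))))
      = integral\<^sup>L gauss_measure (\<lambda>x. integral\<^sup>L gauss_measure (\<lambda>y. k (x, y)))"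
    by (simp add: k_def)
  also have "\<dots> = integral\<^sup>L (gauss_measure \<Otimes>\<^sub>M gauss_measure) k"
    by (rule GG.integral_fst'[OF ik])
  also have "\<dots> = integral\<^sup>L (gauss_measure \<Otimes>\<^sub>M gauss_measure) (\<lambda>z. k0 (swp i z))"
    by (rule Bochner_Integration.integral_cong) (simp_all add: kk0)
  also have "\<dots> = integral\<^sup>L (gauss_measure \<Otimes>\<^sub>M gauss_measure) k0"
    by (rule swap_integral[OF cont_meas[OF ck0]])
  also have "\<dots> = integral\<^sup>L gauss_measure (\<lambda>x. integral\<^sup>L gauss_measure (\<lambda>y. k0 (x, y)))"
    by (rule GG.integral_fst'[OF ik0, symmetric])
  also have "\<dots> = integral\<^sup>L gauss_measure (\<lambda>z. z$i * h z)"
  proof -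
    have "measure gauss_measure (UNIV :: (real^'n) set) = 1" using G.prob_space by simp
    then show ?thesis by (simp add: k0_def)
  qed
  finally show ?thesis .
qed




lemma cont_upd1: "continuous_on UNIV (\<lambda>y::real^'n. upd_coord y i c)"
  unfolding upd_coord_alt by (intro continuous_intros)

lemma key_ineq:
  fixes h :: "real^'n \<Rightarrow> real"
  assumes hc: "continuous_on UNIV h" and hb: "\<And>z. \<bar>h z\<bar> \<le> K * wt z"
    and a: "integral\<^sup>L gauss_measure (\<lambda>z. z$i * h z) = a"
  shows "a^2 \<le> integral\<^sup>L gauss_measure (\<lambda>x. (integral\<^sup>L gauss_measure (\<lambda>y::real^'n. h (upd_coord y i (x$i))))^2)"
proof -
  interpret G: prob_space "gauss_measure :: (real^'n) measure" by (rule prob_gauss)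
  have K: "0 \<le> K" by (rule K_nonneg[OF hb])
  define F where "F x = integral\<^sup>L gauss_measure (\<lambda>y::real^'n. h (upd_coord y i (x$i)))" for x :: "real^'n"
  define W where "W = integral\<^sup>L gauss_measure (\<lambda>y::real^'n. wt y)"
  have W: "0 \<le> W" unfolding W_def by (rule Bochner_Integration.integral_nonneg) (simp add: less_imp_le[OF wt_pos])
  have cpair: "continuous_on UNIV (\<lambda>z::(real^'n) \<times> (real^'n). h (upd_coord (snd z) i (fst z $ i)))"
    by (rule continuous_on_compose2[OF hc cont_upd]) auto
  have Fm: "F \<in> borel_measurable borel"
  proof -
    have s: "sets ((borel :: (real^'n) measure) \<Otimes>\<^sub>M gauss_measure) = sets (borel :: ((real^'n) \<times> (real^'n)) measure)"
    proof -
      have "sets ((borel :: (real^'n) measure) \<Otimes>\<^sub>M gauss_measure) = sets ((borel :: (real^'n) measure) \<Otimes>\<^sub>M borel)"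
        by (rule sets_pair_measure_cong) simp_all
      then show ?thesis by (simp only: borel_prod)
    qed
    have "(\<lambda>(x, y). h (upd_coord y i (x$i))) \<in> borel_measurable ((borel :: (real^'n) measure) \<Otimes>\<^sub>M gauss_measure)"
      unfolding measurable_cong_sets[OF s refl] using cont_meas[OF cpair] by (simp add: case_prod_beta)
    then show ?thesis unfolding F_def by (rule G.borel_measurable_lebesgue_integral)
  qed
  have Fb: "\<bar>F x\<bar> \<le> (K * W) * wt x" for x
  proof -
    have i1: "integrable gauss_measure (\<lambda>y::real^'n. h (upd_coord y i (x$i)))"
    proof (rule gauss_int_bound[where C="K * wt x"])
      show "(\<lambda>y::real^'n. h (upd_coord y i (x$i))) \<in> borel_measurable borel"
        by (rule cont_meas, rule continuous_on_compose2[OF hc cont_upd1]) auto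
      fix y
      have "\<bar>h (upd_coord y i (x$i))\<bar> \<le> K * (wt x * wt y)"
        using hb[of "upd_coord y i (x$i)"] mult_left_mono[OF wt_upd[of y i x] K] by linarith
      also have "\<dots> \<le> K * wt x * (wt y)^2"
        using mult_left_mono[OF wt_le_sq[of y], of "K * wt x"] K wt_pos[of x] by (simp add: mult.assoc)
      finally show "norm (h (upd_coord y i (x$i))) \<le> K * wt x * (wt y)^2" by simp
    qed
    have i2: "integrable gauss_measure (\<lambda>y::real^'n. K * wt x * wt y)"
      by (rule integrable_mult_right) (rule gauss_int_wt)
    have "\<bar>F x\<bar> \<le> integral\<^sup>L gauss_measure (\<lambda>y::real^'n. norm (h (upd_coord y i (x$i))))"
      unfolding F_def real_norm_def[symmetric] by (rule integral_norm_bound)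
    also have "\<dots> \<le> integral\<^sup>L gauss_measure (\<lambda>y::real^'n. K * wt x * wt y)"
    proof (rule integral_mono)
      show "integrable gauss_measure (\<lambda>y::real^'n. norm (h (upd_coord y i (x$i))))" using i1 by (rule integrable_norm)
      show "integrable gauss_measure (\<lambda>y::real^'n. K * wt x * wt y)" by (rule i2)
      fix y
      show "norm (h (upd_coord y i (x$i))) \<le> K * wt x * wt y"
        using hb[of "upd_coord y i (x$i)"] mult_left_mono[OF wt_upd[of y i x] K] by (simp add: mult.assoc)
    qed
    also have "\<dots> = (K * W) * wt x" unfolding W_def by (simp add: mult_ac)
    finally show ?thesis .
  qed
  define B where "B = K * W"
  have B: "0 \<le> B" unfolding B_def using K W by simp
  have iF2: "integrable gauss_measure (\<lambda>x. (F x)^2)"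
  proof (rule gauss_int_bound[where C="B^2"])
    show "(\<lambda>x. (F x)^2) \<in> borel_measurable borel" using Fm by measurable
    fix x
    have "\<bar>F x\<bar> \<le> B * wt x" using Fb[of x] by (simp add: B_def)
    then have "(F x)^2 \<le> (B * wt x)^2"
      by (metis abs_ge_zero power2_abs power_mono)
    then show "norm ((F x)^2) \<le> B^2 * (wt x)^2" by (simp add: power_mult_distrib)
  qed
  have iXF: "integrable gauss_measure (\<lambda>x. x$i * F x)"
  proof (rule gauss_int_bound[where C="2 * B"])
    show "(\<lambda>x. x$i * F x) \<in> borel_measurable borel" using Fm by measurable
    fix x :: "real^'n"
    have "\<bar>x$i * F x\<bar> = \<bar>x$i\<bar> * \<bar>F x\<bar>" by (simp add: abs_mult)
    also have "\<dots> \<le> (2 * wt x) * (B * wt x)"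
      by (rule mult_mono[OF comp_wt]) (use Fb[of x] B wt_pos[of x] in \<open>auto simp: B_def\<close>)
    also have "\<dots> = 2 * B * (wt x)^2" by (simp add: power2_eq_square)
    finally show "norm (x$i * F x) \<le> 2 * B * (wt x)^2" by simp
  qed
  have iX2: "integrable gauss_measure (\<lambda>x::real^'n. (x$i)^2)"
  proof (rule gauss_int_bound[where C=4])
    show "(\<lambda>x::real^'n. (x$i)^2) \<in> borel_measurable borel" by measurable
    fix x :: "real^'n"
    have "(x$i)^2 \<le> (2 * wt x)^2"
      by (metis abs_ge_zero comp_wt power2_abs power_mono)
    then show "norm ((x$i)^2) \<le> 4 * (wt x)^2" by (simp add: power_mult_distrib)
  qed
  have XF: "integral\<^sup>L gauss_measure (\<lambda>x. x$i * F x) = a"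
    unfolding F_def using fubini_swap[OF hc hb, of i] a by simp
  have X2: "integral\<^sup>L gauss_measure (\<lambda>x::real^'n. (x$i)^2) = 1" by (rule gauss_second_moment)
  have eq: "(\<lambda>x. (F x - a * x$i)^2) = (\<lambda>x. ((F x)^2 - (2*a) * (x$i * F x)) + a^2 * (x$i)^2)"
    by (auto simp: fun_eq_iff power2_eq_square algebra_simps)
  have "0 \<le> integral\<^sup>L gauss_measure (\<lambda>x. (F x - a * x$i)^2)"
    by (rule Bochner_Integration.integral_nonneg) simp
  also have "\<dots> = integral\<^sup>L gauss_measure (\<lambda>x. (F x)^2) - (2*a) * a + a^2 * 1"
    unfolding eq using iF2 iXF iX2 XF X2 by simp
  finally have "a^2 \<le> integral\<^sup>L gauss_measure (\<lambda>x. (F x)^2)" by (simp add: power2_eq_square)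
  then show ?thesis unfolding F_def .
qed




lemma norm_add_axis_sq:
  "(norm (w + t *\<^sub>R axis i (1::real)))^2 = (norm (w::real^'n))^2 + 2 * t * (w$i) + t^2"
proof -
  have "(norm (w + t *\<^sub>R axis i (1::real)))^2 = (w + t *\<^sub>R axis i 1) \<bullet> (w + t *\<^sub>R axis i 1)"
    by (simp add: power2_norm_eq_inner)
  also have "\<dots> = w \<bullet> w + 2 * t * (w \<bullet> axis i 1) + t^2 * (axis i 1 \<bullet> axis i (1::real))"
    by (simp add: inner_add_left inner_add_right inner_commute power2_eq_square algebra_simps)
  also have "\<dots> = (norm w)^2 + 2 * t * (w$i) + t^2"
    by (simp add: power2_norm_eq_inner inner_axis inner_axis_axis)
  finally show ?thesis .
qed

lemma partial_ln_gauss: "partial i (\<lambda>z. ln (gauss_dens z)) (w::real^'n) = - (w$i)"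
proof -
  define C :: real where "C = (2 * pi) powr (- real CARD('n) / 2)"
  have Cpos: "0 < C" unfolding C_def by simp
  have eq: "ln (gauss_dens (w + t *\<^sub>R axis i 1)) = ln C - ((norm w)^2 + 2 * t * (w$i) + t^2) / 2" for t
  proof -
    have "gauss_dens (w + t *\<^sub>R axis i 1) = C * exp (- ((norm w)^2 + 2 * t * (w$i) + t^2) / 2)"
      unfolding gauss_dens_def C_def norm_add_axis_sq ..
    then show ?thesis using Cpos by (simp add: ln_mult field_simps)
  qed
  have "((\<lambda>t. ln C - ((norm w)^2 + 2 * t * (w$i) + t^2) / 2) has_real_derivative
          (0 - ((0 + 2 * 1 * (w$i) + 2 * 0) / 2))) (at 0)"
    by (intro derivative_eq_intros) auto
  then have "((\<lambda>t. ln (gauss_dens (w + t *\<^sub>R axis i 1))) has_real_derivative - (w$i)) (at 0)"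
    by (simp add: eq)
  then show ?thesis unfolding partial_def by (rule DERIV_imp_deriv)
qed

lemma partial_ln_rot:
  fixes p :: "real^'n \<Rightarrow> real" and g :: "real^'n \<Rightarrow> real^'n" and V :: "real^'n^'n"
  assumes grad: "\<And>x. GDERIV (\<lambda>y. ln (p y)) x :> g x"
  shows "partial i (\<lambda>z. ln (rot_dens (transpose V) p z)) w = (transpose V *v g (V *v w)) $ i"
proof -
  let ?v = "V *v axis i (1::real)"
  have d1: "((\<lambda>t::real. V *v (w + t *\<^sub>R axis i 1)) has_derivative (\<lambda>s. s *\<^sub>R ?v)) (at 0)"
  proof -
    have "(\<lambda>t::real. V *v (w + t *\<^sub>R axis i 1)) = (\<lambda>t. V *v w + t *\<^sub>R ?v)"
      by (simp add: matrix_vector_right_distrib matrix_vector_mult_scaleR)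
    moreover have "((\<lambda>t::real. V *v w + t *\<^sub>R ?v) has_derivative (\<lambda>s. s *\<^sub>R ?v)) (at 0)"
      by (intro derivative_eq_intros) auto
    ultimately show ?thesis by simp
  qed
  have d2: "((\<lambda>y. ln (p y)) has_derivative (\<lambda>h. h \<bullet> g (V *v w))) (at (V *v (w + 0 *\<^sub>R axis i 1)))"
    using grad[of "V *v w"] unfolding gderiv_def by simp
  have "((\<lambda>t. ln (p (V *v (w + t *\<^sub>R axis i 1)))) has_derivative (\<lambda>s. (s *\<^sub>R ?v) \<bullet> g (V *v w))) (at 0)"
    using has_derivative_compose[OF d1 d2] by simp
  moreover have "(\<lambda>s. (s *\<^sub>R ?v) \<bullet> g (V *v w)) = (*) (?v \<bullet> g (V *v w))"
    by (auto simp: fun_eq_iff)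
  ultimately have "((\<lambda>t. ln (p (V *v (w + t *\<^sub>R axis i 1)))) has_real_derivative (?v \<bullet> g (V *v w))) (at 0)"
    unfolding has_field_derivative_def by simp
  then have "partial i (\<lambda>z. ln (rot_dens (transpose V) p z)) w = ?v \<bullet> g (V *v w)"
    unfolding partial_def rot_dens_def transpose_transpose by (rule DERIV_imp_deriv)
  also have "?v \<bullet> g (V *v w) = (transpose V *v g (V *v w)) $ i"
    by (simp add: inner_vec_def matrix_vector_mult_def transpose_def axis_def mult.commute
                  if_distrib[where f="\<lambda>u. V $ _ $ _ * u"] sum.delta cong: if_cong)
  finally show ?thesis .
qed




definition frob :: "real^'n^'n \<Rightarrow> real" where
  "frob A = (\<Sum>i\<in>UNIV. \<Sum>j\<in>UNIV. (A$i$j)^2)"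

lemma frob_col: "frob A = (\<Sum>j\<in>UNIV. (norm (column j A))^2)"
proof -
  have "frob A = (\<Sum>j\<in>UNIV. \<Sum>i\<in>UNIV. (A$i$j)^2)" unfolding frob_def by (rule sum.swap)
  then show ?thesis unfolding norm_sq_cart column_def by simp
qed

lemma col_mult: "column j (R ** A) = R *v column j (A::real^'n^'n)"
  by (simp add: vec_eq_iff column_def matrix_matrix_mult_def matrix_vector_mult_def)

lemma frob_left: assumes R: "orthogonal_matrix (R::real^'n^'n)" shows "frob (R ** A) = frob A"
proof -
  have oR: "orthogonal_transformation (\<lambda>x. R *v x)"
    using R by (simp add: orthogonal_transformation_matrix)
  show ?thesis unfolding frob_col col_mult by (simp add: orthogonal_transformation_norm[OF oR])
qed

lemma frob_transpose: "frob (transpose A) = frob (A::real^'n^'n)"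
proof -
  have "frob (transpose A) = (\<Sum>i\<in>UNIV. \<Sum>j\<in>UNIV. (A$j$i)^2)" unfolding frob_def transpose_def by simp
  also have "\<dots> = frob A" unfolding frob_def by (rule sum.swap)
  finally show ?thesis .
qed

lemma frob_right: assumes R: "orthogonal_matrix (R::real^'n^'n)" shows "frob (A ** transpose R) = frob A"
proof -
  have "A ** transpose R = transpose (R ** transpose A)" by (simp add: matrix_transpose_mul)
  then show ?thesis using frob_left[OF R] frob_transpose by metis
qed

lemma diag_le_frob: "(\<Sum>i\<in>UNIV. (M$i$i)^2) \<le> frob (M::real^'n^'n)"
  unfolding frob_def
  by (intro sum_mono member_le_sum) auto

lemma frob_diag: "frob (diag_mat \<nu>) = (\<Sum>i\<in>UNIV. (\<nu>$i)^2)"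
  unfolding frob_def diag_mat_def by (simp add: if_distrib[where f="\<lambda>u. u^2"] cong: if_cong)

lemma VHV:
  assumes V: "orthogonal_matrix (V::real^'n^'n)" and H_eig: "H = V ** diag_mat \<nu> ** transpose V"
  shows "transpose V ** H ** V = diag_mat \<nu>"
proof -
  have "transpose V ** H ** V = (transpose V ** V) ** diag_mat \<nu> ** (transpose V ** V)"
    by (simp add: H_eig matrix_mul_assoc)
  also have "\<dots> = diag_mat \<nu>" using V by (simp add: orthogonal_matrix_def)
  finally show ?thesis .
qed

lemma part1:
  assumes V: "orthogonal_matrix (V::real^'n^'n)" and H_eig: "H = V ** diag_mat \<nu> ** transpose V"
  shows "\<forall>R. orthogonal_matrix R \<longrightarrow>
            (\<Sum>i\<in>UNIV. ((R ** H ** transpose R) $ i $ i)\<^sup>2)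
            \<le> (\<Sum>i\<in>UNIV. ((transpose V ** H ** transpose (transpose V)) $ i $ i)\<^sup>2)"
proof (intro allI impI)
  fix R :: "real^'n^'n" assume R: "orthogonal_matrix R"
  have fH: "frob H = (\<Sum>i\<in>UNIV. (\<nu>$i)^2)"
    using frob_right[OF V] frob_left[OF V] frob_diag H_eig by (simp add: matrix_mul_assoc)
  have "(\<Sum>i\<in>UNIV. ((R ** H ** transpose R) $ i $ i)\<^sup>2) \<le> frob (R ** H ** transpose R)"
    by (rule diag_le_frob)
  also have "\<dots> = frob H" using frob_right[OF R] frob_left[OF R] by simp
  also have "\<dots> = (\<Sum>i\<in>UNIV. ((transpose V ** H ** transpose (transpose V)) $ i $ i)\<^sup>2)"
    using VHV[OF V H_eig] fH by (simp add: diag_mat_def)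
  finally show "(\<Sum>i\<in>UNIV. ((R ** H ** transpose R) $ i $ i)\<^sup>2)
            \<le> (\<Sum>i\<in>UNIV. ((transpose V ** H ** transpose (transpose V)) $ i $ i)\<^sup>2)" .
qed

lemma gauss_rot:
  fixes V :: "real^'n^'n" and \<phi> :: "real^'n \<Rightarrow> real"
  assumes V: "orthogonal_matrix V" and \<phi>: "\<phi> \<in> borel_measurable borel"
  shows "integral\<^sup>L gauss_measure \<phi> = integral\<^sup>L gauss_measure (\<lambda>z. \<phi> (V *v z))"
proof -
  have oV: "orthogonal_transformation (\<lambda>x. V *v x)"
    using V by (simp add: orthogonal_transformation_matrix)
  have gdV: "gauss_dens (V *v z) = gauss_dens z" for z
    unfolding gauss_dens_def by (simp add: orthogonal_transformation_norm[OF oV])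
  have mV: "(\<lambda>z. V *v z) \<in> borel_measurable borel"
    by (rule lin_meas) (simp add: matrix_vector_mul_linear)
  have \<phi>V: "(\<lambda>z. \<phi> (V *v z)) \<in> borel_measurable borel" using \<phi> mV by (rule measurable_compose[rotated])
  have "integral\<^sup>L gauss_measure \<phi> = integral\<^sup>L lborel (\<lambda>x. gauss_dens x * \<phi> x)"
    unfolding gauss_measure_def by (subst integral_density) (use \<phi> in \<open>auto simp: gauss_dens_nonneg\<close>)
  also have "\<dots> = integral\<^sup>L (distr lborel borel (\<lambda>x. V *v x)) (\<lambda>x. gauss_dens x * \<phi> x)"
    by (simp add: lborel_orth_matrix[OF V])
  also have "\<dots> = integral\<^sup>L lborel (\<lambda>z. gauss_dens (V *v z) * \<phi> (V *v z))"
    by (rule integral_distr) (use mV \<phi> in auto)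
  also have "\<dots> = integral\<^sup>L lborel (\<lambda>z. gauss_dens z * \<phi> (V *v z))"
    by (simp add: gdV)
  also have "\<dots> = integral\<^sup>L gauss_measure (\<lambda>z. \<phi> (V *v z))"
    unfolding gauss_measure_def by (subst integral_density) (use \<phi>V in \<open>auto simp: gauss_dens_nonneg\<close>)
  finally show ?thesis .
qed




lemma g_wt_bound:
  fixes g :: "real^'n \<Rightarrow> real^'n"
  assumes c: "c > 0" and m: "m \<ge> 0" and gb: "\<And>x. norm (g x) \<le> c * (1 + norm x powr m)"
  shows "\<exists>D>0. \<forall>x. norm (g x) \<le> D * wt x"
proof -
  obtain Cm where Cm: "Cm > 0" "\<forall>t::real\<ge>0. t powr m \<le> Cm * exp (t^2/8)" using powr_wt[OF m] by blast
  have "norm (g x) \<le> (c * (1 + Cm)) * wt x" for x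
  proof -
    have "norm x powr m \<le> Cm * exp ((norm x)^2/8)" using Cm(2) norm_ge_zero by blast
    then have h1: "norm x powr m \<le> Cm * wt x" unfolding wt_def .
    have h2: "(1 + Cm) * wt x = wt x + Cm * wt x" by (simp add: algebra_simps)
    have "1 + norm x powr m \<le> (1 + Cm) * wt x" using h1 h2 wt_ge1[of x] by linarith
    then have "c * (1 + norm x powr m) \<le> c * ((1 + Cm) * wt x)" using c by simp
    then show ?thesis using gb[of x] by (simp add: mult.assoc)
  qed
  moreover have "c * (1 + Cm) > 0" using c Cm by simp
  ultimately show ?thesis by (intro exI[of _ "c * (1 + Cm)"]) auto
qed




lemma H_nu:
  fixes g :: "real^'n \<Rightarrow> real^'n" and H V :: "real^'n^'n" and \<nu> :: "real^'n"
  assumes gc: "continuous_on UNIV g" and gD: "\<And>x. norm (g x) \<le> D * wt x"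
    and H_def: "H = integral\<^sup>L gauss_measure (\<lambda>x. \<chi> i j. x $ i * (g x + x) $ j)"
    and V: "orthogonal_matrix V" and H_eig: "H = V ** diag_mat \<nu> ** transpose V"
  shows "integral\<^sup>L gauss_measure (\<lambda>z. z$i * (- (z$i) - (transpose V *v g (V *v z))$i)) = - (\<nu>$i)"
proof -
  define E where "E a b x = x$a * (g x + x)$b" for a b and x :: "real^'n"
  have D: "0 \<le> D"
  proof -
    have "0 \<le> D * wt (0::real^'n)" using gD[of 0] norm_ge_zero[of "g 0"] by linarith
    then show ?thesis using wt_pos[of "0::real^'n"] by (simp add: zero_le_mult_iff)
  qed
  define C where "C = 2 * (D + 2)"
  have Eb: "\<bar>E a b x\<bar> \<le> C * (wt x)^2" for a b x
  proof -
    have "\<bar>(g x + x)$b\<bar> \<le> norm (g x + x)" by (rule component_le_norm_cart)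
    also have "\<dots> \<le> norm (g x) + norm x" by (rule norm_triangle_ineq)
    also have "\<dots> \<le> D * wt x + 2 * wt x"
      using gD[of x] lin_wt[of "norm x"] unfolding wt_def by simp
    finally have b1: "\<bar>(g x + x)$b\<bar> \<le> (D + 2) * wt x" by (simp add: algebra_simps)
    have "\<bar>E a b x\<bar> = \<bar>x$a\<bar> * \<bar>(g x + x)$b\<bar>" by (simp add: E_def abs_mult)
    also have "\<dots> \<le> (2 * wt x) * ((D + 2) * wt x)"
      by (rule mult_mono[OF comp_wt b1]) (use wt_pos[of x] D in auto)
    also have "\<dots> = C * (wt x)^2" by (simp add: C_def power2_eq_square)
    finally show ?thesis .
  qed
  have Ec: "continuous_on UNIV (E a b)" for a b
    unfolding E_def by (intro continuous_intros gc)
  have Ei: "integrable gauss_measure (E a b)" for a b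
    by (rule gauss_int_bound[OF cont_meas[OF Ec]]) (use Eb in simp)
  define f where "f x = (\<chi> a b. E a b x)" for x :: "real^'n"
  have fc: "continuous_on UNIV f" unfolding f_def by (intro continuous_intros Ec)
  have fi: "integrable gauss_measure f"
  proof (rule gauss_int_bound[OF cont_meas[OF fc], where C="real CARD('n) * real CARD('n) * C"])
    fix x :: "real^'n"
    have "norm (f x) \<le> (\<Sum>a\<in>UNIV. norm (f x $ a))"
      unfolding norm_vec_def by (rule L2_set_le_sum) simp
    also have "\<dots> \<le> (\<Sum>a\<in>UNIV. \<Sum>b\<in>UNIV. \<bar>E a b x\<bar>)"
    proof (rule sum_mono)
      fix a
      have "norm (f x $ a) \<le> (\<Sum>b\<in>UNIV. \<bar>f x $ a $ b\<bar>)" by (rule norm_le_l1_cart)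
      then show "norm (f x $ a) \<le> (\<Sum>b\<in>UNIV. \<bar>E a b x\<bar>)" by (simp add: f_def)
    qed
    also have "\<dots> \<le> (\<Sum>a\<in>(UNIV::'n set). \<Sum>b\<in>(UNIV::'n set). C * (wt x)^2)"
      by (intro sum_mono Eb)
    also have "\<dots> = real CARD('n) * real CARD('n) * C * (wt x)^2" by simp
    finally show "norm (f x) \<le> real CARD('n) * real CARD('n) * C * (wt x)^2" .
  qed
  have Hab: "H$a$b = integral\<^sup>L gauss_measure (E a b)" for a b
  proof -
    have bl: "bounded_linear (\<lambda>M::real^'n^'n. M$a$b)"
      by (rule bounded_linear_compose[of "\<lambda>v::real^'n. v$b" "\<lambda>M::real^'n^'n. M$a"]) (rule bounded_linear_vec_nth)+
    have "integral\<^sup>L gauss_measure (\<lambda>x. f x $ a $ b) = integral\<^sup>L gauss_measure f $ a $ b"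
      by (rule integral_bounded_linear[OF bl fi])
    moreover have "(\<lambda>x. \<chi> i j. x $ i * (g x + x) $ j) = f"
      unfolding f_def E_def ..
    ultimately show ?thesis unfolding H_def by (simp add: f_def)
  qed
  have VtV: "transpose V ** V = mat 1" using V by (simp add: orthogonal_matrix_def)
  have "(transpose V ** H ** V)$i$i = (\<Sum>b\<in>UNIV. \<Sum>a\<in>UNIV. V$a$i * V$b$i * H$a$b)"
    by (simp add: matrix_matrix_mult_def transpose_def sum_distrib_right sum_distrib_left mult_ac)
  also have "\<dots> = (\<Sum>b\<in>UNIV. \<Sum>a\<in>UNIV. V$a$i * V$b$i * integral\<^sup>L gauss_measure (E a b))"
    by (simp add: Hab)
  also have "\<dots> = integral\<^sup>L gauss_measure (\<lambda>x. \<Sum>b\<in>UNIV. \<Sum>a\<in>UNIV. V$a$i * V$b$i * E a b x)"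
    by (simp add: Ei integral_sum)
  finally have T1: "(transpose V ** H ** V)$i$i = integral\<^sup>L gauss_measure (\<lambda>x. \<Sum>b\<in>UNIV. \<Sum>a\<in>UNIV. V$a$i * V$b$i * E a b x)" .
  define \<phi> where "\<phi> x = (\<Sum>b\<in>UNIV. \<Sum>a\<in>UNIV. V$a$i * V$b$i * E a b x)" for x
  have \<phi>c: "continuous_on UNIV \<phi>" unfolding \<phi>_def by (intro continuous_intros Ec)
  have \<phi>V: "\<phi> (V *v z) = z$i * ((transpose V *v g (V *v z))$i + z$i)" for z
  proof -
    have tv: "(transpose V *v u)$i = (\<Sum>a\<in>UNIV. V$a$i * u$a)" for u
      by (simp add: matrix_vector_mult_def transpose_def)
    have VVz: "transpose V *v (V *v z) = z"
      by (simp add: matrix_vector_mul_assoc VtV)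
    have "\<phi> (V *v z) = (\<Sum>a\<in>UNIV. V$a$i * (V *v z)$a) * (\<Sum>b\<in>UNIV. V$b$i * (g (V *v z) + V *v z)$b)"
      unfolding \<phi>_def E_def sum_product by (subst sum.swap) (simp add: mult_ac)
    also have "\<dots> = (transpose V *v (V *v z))$i * (transpose V *v (g (V *v z) + V *v z))$i"
      by (simp only: tv)
    also have "\<dots> = z$i * ((transpose V *v g (V *v z))$i + z$i)"
      by (simp only: matrix_vector_right_distrib vector_add_component VVz)
    finally show ?thesis .
  qed
  have "\<nu>$i = (transpose V ** H ** V)$i$i" using VHV[OF V H_eig] by (simp add: diag_mat_def)
  also have "\<dots> = integral\<^sup>L gauss_measure \<phi>" unfolding T1 \<phi>_def ..
  also have "\<dots> = integral\<^sup>L gauss_measure (\<lambda>z. \<phi> (V *v z))" by (rule gauss_rot[OF V cont_meas[OF \<phi>c]])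
  also have "\<dots> = integral\<^sup>L gauss_measure (\<lambda>z. z$i * ((transpose V *v g (V *v z))$i + z$i))"
    by (simp add: \<phi>V)
  finally have "\<nu>$i = integral\<^sup>L gauss_measure (\<lambda>z. z$i * ((transpose V *v g (V *v z))$i + z$i))" .
  moreover have "(\<lambda>z. z$i * (- (z$i) - (transpose V *v g (V *v z))$i)) = (\<lambda>z. - (z$i * ((transpose V *v g (V *v z))$i + z$i)))"
    by (auto simp: fun_eq_iff algebra_simps)
  ultimately show ?thesis by simp
qed




theorem proposition1:
  fixes p :: "real^'n \<Rightarrow> real" and g :: "real^'n \<Rightarrow> real^'n"
    and c m :: real and H V :: "real^'n^'n" and \<nu> :: "real^'n"
  assumes p_pos: "\<And>x. p x > 0"
    and p_int: "integrable lborel p"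
    and p_norm: "integral\<^sup>L lborel p = 1"
    and grad: "\<And>x. GDERIV (\<lambda>y. ln (p y)) x :> g x"
    and grad_cont: "continuous_on UNIV g"
    and c_pos: "c > 0" and m_ge: "m \<ge> 2"
    and log_bound: "\<And>x. \<bar>ln (p x)\<bar> \<le> c * (1 + norm x powr m)"
    and grad_bound: "\<And>x. norm (g x) \<le> c * (1 + norm x powr m)"
    and H_def: "H = integral\<^sup>L gauss_measure (\<lambda>x. \<chi> i j. x $ i * (g x + x) $ j)"
    and H_sym: "transpose H = H"
    and V_orth: "orthogonal_matrix V"
    and H_eig: "H = V ** diag_mat \<nu> ** transpose V"
  shows "(\<forall>R. orthogonal_matrix R \<longrightarrow>
            (\<Sum>i\<in>UNIV. ((R ** H ** transpose R) $ i $ i)\<^sup>2)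
            \<le> (\<Sum>i\<in>UNIV. ((transpose V ** H ** transpose (transpose V)) $ i $ i)\<^sup>2))
         \<and> tildeI gauss_dens (rot_dens (transpose V) p) \<ge> (\<Sum>i\<in>UNIV. (\<nu> $ i)\<^sup>2)"
proof -
  have oV: "orthogonal_transformation (\<lambda>x. V *v x)"
    using V_orth by (simp add: orthogonal_transformation_matrix)
  have oVt: "orthogonal_transformation (\<lambda>x. transpose V *v x)"
    unfolding orthogonal_transformation_matrix
    by (simp only: matrix_vector_mul_linear matrix_of_matrix_vector_mul orthogonal_matrix_transpose V_orth simp_thms)
  obtain D where D: "D > 0" "\<And>x. norm (g x) \<le> D * wt x"
    using g_wt_bound[OF c_pos _ grad_bound] m_ge by force
  define h where "h i z = - (z$i) - (transpose V *v g (V *v z))$i" for i and z :: "real^'n"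
  have hc: "continuous_on UNIV (h i)" for i
  proof -
    have "bounded_linear (\<lambda>z::real^'n. V *v z)" using orthogonal_transformation_linear[OF oV] linear_linear by blast
    then have c1: "continuous_on UNIV (\<lambda>z::real^'n. V *v z)" by (rule linear_continuous_on)
    have "bounded_linear (\<lambda>z::real^'n. transpose V *v z)" using orthogonal_transformation_linear[OF oVt] linear_linear by blast
    then have c2: "continuous_on UNIV (\<lambda>z::real^'n. transpose V *v z)" by (rule linear_continuous_on)
    have c3: "continuous_on UNIV (\<lambda>z. g (V *v z))"
      by (rule continuous_on_compose2[OF grad_cont c1]) auto
    have c4: "continuous_on UNIV (\<lambda>z. transpose V *v g (V *v z))"
      by (rule continuous_on_compose2[OF c2 c3]) auto
    show ?thesis unfolding h_def by (intro continuous_intros c4)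
  qed
  have hb: "\<bar>h i z\<bar> \<le> (2 + D) * wt z" for i z
  proof -
    have wV: "wt (V *v z) = wt z" unfolding wt_def by (simp add: orthogonal_transformation_norm[OF oV])
    have "\<bar>h i z\<bar> \<le> \<bar>z$i\<bar> + \<bar>(transpose V *v g (V *v z))$i\<bar>" unfolding h_def by simp
    also have "\<dots> \<le> 2 * wt z + norm (transpose V *v g (V *v z))"
      using comp_wt[of z i] component_le_norm_cart[of "transpose V *v g (V *v z)" i] by linarith
    also have "norm (transpose V *v g (V *v z)) = norm (g (V *v z))"
      by (rule orthogonal_transformation_norm[OF oVt])
    also have "\<dots> \<le> D * wt z" using D(2)[of "V *v z"] wV by simp
    finally show ?thesis by (simp add: algebra_simps)
  qed
  have dm: "dens_measure gauss_dens = gauss_measure"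
    unfolding dens_measure_def gauss_measure_def ..
  have tI: "tildeI gauss_dens (rot_dens (transpose V) p)
      = (\<Sum>i\<in>UNIV. integral\<^sup>L gauss_measure (\<lambda>x. (integral\<^sup>L gauss_measure (\<lambda>y. h i (upd_coord y i (x$i))))^2))"
    unfolding tildeI_def dm h_def
    by (simp add: partial_ln_gauss partial_ln_rot[OF grad])
  have each: "(\<nu>$i)^2 \<le> integral\<^sup>L gauss_measure (\<lambda>x. (integral\<^sup>L gauss_measure (\<lambda>y. h i (upd_coord y i (x$i))))^2)" for i
  proof -
    have a: "integral\<^sup>L gauss_measure (\<lambda>z. z$i * h i z) = - (\<nu>$i)"
      unfolding h_def by (rule H_nu[OF grad_cont D(2) H_def V_orth H_eig])
    have "(- (\<nu>$i))^2 \<le> integral\<^sup>L gauss_measure (\<lambda>x. (integral\<^sup>L gauss_measure (\<lambda>y. h i (upd_coord y i (x$i))))^2)"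
      by (rule key_ineq[OF hc hb a])
    then show ?thesis by simp
  qed
  have "(\<Sum>i\<in>UNIV. (\<nu> $ i)\<^sup>2) \<le> tildeI gauss_dens (rot_dens (transpose V) p)"
    unfolding tI by (rule sum_mono) (rule each)
  then show ?thesis using part1[OF V_orth H_eig] by blast
qed


end
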